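(* Let $G$ be a finite group, $A\subset G$, $K>0$, $l$ a positive integer with $\mathbb{P}_G(A^l)\le K\,\mathbb{P}_G(A^{l-1})$, and $\epsilon\in(0,1]$. Then $$AA^{-1}\subset\operatorname{LinBohr}(\operatorname{LSpec}(A^l,\epsilon),2\epsilon\sqrt{2K}).$$
   Context: $A^l$ is the $l$-fold product set ($A^0:=\{1_G\}$), $AA^{-1}=\{ab^{-1}:a,b\in A\}$, $\mathbb{P}_G(E)=|E|/|G|$. $\operatorname{Lin}(G)$ is the set of homomorphisms $G\to S^1$; for $B\subset G$, $\widehat{1_B}(\gamma):=\mathbb{E}_{x\in G}1_B(x)\gamma(x)$ and $\operatorname{LSpec}(B,\eta):=\{\gamma\in\operatorname{Lin}(G):|\widehat{1_B}(\gamma)|\ge\sqrt{1-\eta^2/2}\,\mathbb{P}_G(B)\}$. For $z\in S^1$, $\|z\|:=(2\pi)^{-1}|\operatorname{Arg}z|$ with $\operatorname{Arg}z\in(-\pi,\pi]$, and $\operatorname{LinBohr}(\Lambda,\delta):=\{x\in G:\|\gamma(x)\|\le\delta\ \forall\gamma\in\Lambda\}$. *)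

theory Defs
  imports "HOL-Analysis.Analysis" "HOL-Algebra.Group"
begin

fun setpow :: "('a, 'b) monoid_scheme \<Rightarrow> 'a set \<Rightarrow> nat \<Rightarrow> 'a set" where
  "setpow G A 0 = {\<one>\<^bsub>G\<^esub>}"
| "setpow G A (Suc n) = {x \<otimes>\<^bsub>G\<^esub> a | x a. x \<in> setpow G A n \<and> a \<in> A}"

definition diffset :: "('a, 'b) monoid_scheme \<Rightarrow> 'a set \<Rightarrow> 'a set" where
  "diffset G A = {a \<otimes>\<^bsub>G\<^esub> inv\<^bsub>G\<^esub> b | a b. a \<in> A \<and> b \<in> A}"

definition prob_G :: "('a, 'b) monoid_scheme \<Rightarrow> 'a set \<Rightarrow> real" where
  "prob_G G E = real (card E) / real (card (carrier G))"

text \<open>Homomorphisms G \<rightarrow> S^1 (values outside the carrier irrelevant).\<close>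
definition Lin :: "('a, 'b) monoid_scheme \<Rightarrow> ('a \<Rightarrow> complex) set" where
  "Lin G = {\<gamma>. (\<forall>x\<in>carrier G. cmod (\<gamma> x) = 1) \<and>
               (\<forall>x\<in>carrier G. \<forall>y\<in>carrier G. \<gamma> (x \<otimes>\<^bsub>G\<^esub> y) = \<gamma> x * \<gamma> y)}"

definition fourier_ind :: "('a, 'b) monoid_scheme \<Rightarrow> 'a set \<Rightarrow> ('a \<Rightarrow> complex) \<Rightarrow> complex" where
  "fourier_ind G B \<gamma> = (\<Sum>x\<in>carrier G. (if x \<in> B then \<gamma> x else 0)) / of_nat (card (carrier G))"

definition LSpec :: "('a, 'b) monoid_scheme \<Rightarrow> 'a set \<Rightarrow> real \<Rightarrow> ('a \<Rightarrow> complex) set" where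
  "LSpec G B \<eta> = {\<gamma> \<in> Lin G. cmod (fourier_ind G B \<gamma>) \<ge> sqrt (1 - \<eta>^2 / 2) * prob_G G B}"

definition circ_norm :: "complex \<Rightarrow> real" where
  "circ_norm z = \<bar>Arg z\<bar> / (2 * pi)"

definition LinBohr :: "('a, 'b) monoid_scheme \<Rightarrow> ('a \<Rightarrow> complex) set \<Rightarrow> real \<Rightarrow> 'a set" where
  "LinBohr G \<Lambda> \<delta> = {x \<in> carrier G. \<forall>\<gamma>\<in>\<Lambda>. circ_norm (\<gamma> x) \<le> \<delta>}"

end

theory Submission
  imports Defs
begin

lemma sin_lower: fixes x :: real assumes "0 \<le> x" "x \<le> 2" shows "sin x \<ge> x / 3"
proof -
  have "\<bar>sin x - (\<Sum>m<3. sin_coeff m * x ^ m)\<bar> \<le> inverse (fact 3) * \<bar>x\<bar> ^ 3"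
    by (rule Maclaurin_sin_bound)
  moreover have "(\<Sum>m<3. sin_coeff m * x ^ m) = x"
    by (simp add: numeral_3_eq_3 sin_coeff_def)
  ultimately have "\<bar>sin x - x\<bar> \<le> x^3/6" using assms by (simp add: fact_numeral)
  hence "sin x \<ge> x - x^3/6" by linarith
  moreover have "x^3 \<le> 4 * x" proof -
    have "x^3 = x * x^2" by (simp add: power3_eq_cube power2_eq_square)
    also have "\<dots> \<le> x * 4" using assms by (intro mult_left_mono) (auto simp: power2_eq_square intro: mult_mono[of x 2 x 2, simplified])
    finally show ?thesis by simp
  qed
  ultimately show ?thesis by linarith
qed

lemma circ_le: assumes "cmod z = 1" shows "circ_norm z \<le> cmod (z - 1)"
proof -
  define t where "t = Arg z"
  have zt: "exp (\<i> * t) = z" using assms complex_norm_eq_1_exp_eq t_def by blast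
  have Re: "Re z = cos t" and Im: "Im z = sin t" using zt[symmetric] by (simp_all add: Re_exp Im_exp)
  have tb: "-pi < t" "t \<le> pi" using t_def mpi_less_Arg Arg_le_pi by auto
  have cn: "circ_norm z = \<bar>t\<bar> / (2*pi)" by (simp add: circ_norm_def t_def)
  show ?thesis
  proof (cases "\<bar>t\<bar> \<ge> pi/2")
    case True
    have "cos (pi - \<bar>t\<bar>) \<ge> 0" using True tb by (intro cos_ge_zero) auto
    hence "cos t \<le> 0" by simp
    hence "1 \<le> \<bar>Re (z - 1)\<bar>" using Re by simp
    also have "\<dots> \<le> cmod (z - 1)" by (rule abs_Re_le_cmod)
    moreover have "\<bar>t\<bar> / (2*pi) \<le> 1/2" using tb by (simp add: divide_simps)
    ultimately show ?thesis using cn by linarith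
  next
    case False
    have "\<bar>sin t\<bar> = sin \<bar>t\<bar>" using tb sin_ge_zero[of t] sin_ge_zero[of "-t"]
      by (cases "t \<ge> 0") auto
    also have "\<dots> \<ge> \<bar>t\<bar>/3" using False pi_less_4 by (intro sin_lower) auto
    finally have "\<bar>t\<bar>/3 \<le> \<bar>Im (z - 1)\<bar>" using Im by simp
    also have "\<dots> \<le> cmod (z - 1)" by (rule abs_Im_le_cmod)
    finally have "\<bar>t\<bar>/3 \<le> cmod (z - 1)" .
    moreover have "\<bar>t\<bar> / (2*pi) \<le> \<bar>t\<bar>/3" using pi_gt3 by (simp add: divide_simps) (intro mult_left_mono, auto)
    ultimately show ?thesis using cn by linarith
  qed
qed

lemma setpow_sub: assumes "group G" "A \<subseteq> carrier G" shows "setpow G A n \<subseteq> carrier G"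
proof (induction n)
  case 0 then show ?case using assms by (simp add: group.is_monoid monoid.one_closed)
next
  case (Suc n) then show ?case using assms by (auto intro: monoid.m_closed group.is_monoid)
qed

lemma setpow_ne: assumes "A \<noteq> {}" shows "setpow G A n \<noteq> {}"
  using assms by (induction n) auto

lemma norm_diff_sq: fixes u w :: complex assumes "cmod u = 1" "cmod w = 1"
  shows "(cmod (u - w))^2 = 2 - 2 * Re (u * cnj w)"
proof -
  have "(cmod (u - w))^2 = (cmod u)^2 + (cmod w)^2 - 2 * Re (u * cnj w)"
    unfolding cmod_power2 by (simp add: power2_eq_square algebra_simps)
  then show ?thesis using assms by simp
qed

lemma sq_tri: fixes p q w :: complex
  shows "(cmod (p - q))^2 \<le> 2 * (cmod (p - w))^2 + 2 * (cmod (q - w))^2"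
proof -
  have "cmod (p - q) \<le> cmod (p - w) + cmod (q - w)"
    using norm_triangle_ineq4[of "p - w" "q - w"] by simp
  hence "(cmod (p - q))^2 \<le> (cmod (p - w) + cmod (q - w))^2"
    by (intro power_mono) auto
  also have "\<dots> \<le> 2 * (cmod (p - w))^2 + 2 * (cmod (q - w))^2"
    using sum_squares_ge_zero[of "cmod (p - w) - cmod (q - w)" 0]
    by (simp add: power2_eq_square algebra_simps)
  finally show ?thesis .
qed

lemma sqrt_fact: fixes s :: real assumes "0 \<le> s" "s \<le> 1" shows "1 - sqrt (1 - s) \<le> s"
proof -
  have "1 - s \<le> sqrt (1 - s)" using assms
    by (intro real_le_rsqrt) (use mult_left_le[of "1-s" "1-s"] in \<open>simp add: power2_eq_square\<close>)
  then show ?thesis by linarith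
qed


lemma lin_facts: fixes G (structure) assumes "group G" "\<gamma> \<in> Lin G" "b \<in> carrier G"
  shows "\<gamma> (inv\<^bsub>G\<^esub> b) = cnj (\<gamma> b)" "cmod (\<gamma> b) = 1"
proof -
  interpret group G by fact
  have n: "\<And>x. x \<in> carrier G \<Longrightarrow> cmod (\<gamma> x) = 1" and m: "\<And>x y. x \<in> carrier G \<Longrightarrow> y \<in> carrier G \<Longrightarrow> \<gamma> (x \<otimes> y) = \<gamma> x * \<gamma> y"
    using assms(2) by (auto simp: Lin_def)
  show "cmod (\<gamma> b) = 1" using n assms by auto
  have "\<gamma> \<one> = \<gamma> \<one> * \<gamma> \<one>" using m[of \<one> \<one>] by simp
  moreover have "\<gamma> \<one> \<noteq> 0" using n[of \<one>] by auto
  ultimately have g1: "\<gamma> \<one> = 1" by (metis mult_cancel_left1)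
  have "\<gamma> b * \<gamma> (inv b) = 1" using m[of b "inv b"] assms g1 by simp
  moreover have "\<gamma> b * cnj (\<gamma> b) = 1" using n[of b] assms
    by (metis complex_norm_square mult.commute of_real_1 power_one complex_mult_cnj)
  moreover have "\<gamma> b \<noteq> 0" using n[of b] assms by auto
  ultimately show "\<gamma> (inv b) = cnj (\<gamma> b)" by (metis mult_left_cancel)
qed

theorem proposition8p1:
  fixes G (structure) and A :: "'a set" and K \<epsilon> :: real and l :: nat
  assumes "group G" and "finite (carrier G)" and "A \<subseteq> carrier G"
    and "K > 0" and "l \<ge> 1"
    and "prob_G G (setpow G A l) \<le> K * prob_G G (setpow G A (l - 1))"
    and "0 < \<epsilon>" and "\<epsilon> \<le> 1"
  shows "diffset G A \<subseteq> LinBohr G (LSpec G (setpow G A l) \<epsilon>) (2 * \<epsilon> * sqrt (2 * K))"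
proof
  interpret group G by fact
  fix z assume "z \<in> diffset G A"
  then obtain a b where ab: "a \<in> A" "b \<in> A" "z = a \<otimes> inv b" by (auto simp: diffset_def)
  have aG: "a \<in> carrier G" and bG: "b \<in> carrier G" using ab assms(3) by auto
  have zG: "z \<in> carrier G" using ab aG bG by simp
  obtain m where lm: "l = Suc m" using assms(5) by (cases l) auto
  define B where "B = setpow G A l"
  define B' where "B' = setpow G A m"
  have BB': "B = {x \<otimes> y | x y. x \<in> B' \<and> y \<in> A}" by (simp add: B_def B'_def lm)
  have BG: "B \<subseteq> carrier G" and B'G: "B' \<subseteq> carrier G"
    using setpow_sub[OF assms(1,3)] B_def B'_def by auto
  have finB: "finite B" and finB': "finite B'" using BG B'G assms(2) finite_subset by auto
  have B'ne: "B' \<noteq> {}" unfolding B'_def using setpow_ne[of A G m] ab(1) by auto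
  have cB'pos: "card B' > 0" using B'ne finB' card_gt_0_iff by blast
  have cGpos: "card (carrier G) > 0" using assms(2) card_gt_0_iff by blast
  have cardBK: "real (card B) \<le> K * real (card B')"
    using assms(6) cGpos unfolding B_def B'_def lm prob_G_def by (simp add: divide_simps)
  show "z \<in> LinBohr G (LSpec G (setpow G A l) \<epsilon>) (2 * \<epsilon> * sqrt (2 * K))"
    unfolding LinBohr_def
  proof (intro CollectI conjI ballI zG)
    fix \<gamma> assume g: "\<gamma> \<in> LSpec G (setpow G A l) \<epsilon>"
    hence gL: "\<gamma> \<in> Lin G" and gS: "cmod (fourier_ind G B \<gamma>) \<ge> sqrt (1 - \<epsilon>^2/2) * prob_G G B"
      by (auto simp: LSpec_def B_def)
    have n1: "\<And>x. x \<in> carrier G \<Longrightarrow> cmod (\<gamma> x) = 1" using lin_facts[OF assms(1) gL] by blast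
    have mul: "\<And>x y. x \<in> carrier G \<Longrightarrow> y \<in> carrier G \<Longrightarrow> \<gamma> (x \<otimes> y) = \<gamma> x * \<gamma> y"
      using gL by (auto simp: Lin_def)
    define S where "S = (\<Sum>y\<in>B. \<gamma> y)"
    have "(\<Sum>x\<in>carrier G. (if x \<in> B then \<gamma> x else 0)) = S"
    proof -
      have e: "carrier G \<inter> B = B" using BG by blast
      show ?thesis unfolding S_def using sum.inter_restrict[OF assms(2), of \<gamma> B] unfolding e by simp
    qed
    hence "fourier_ind G B \<gamma> = S / of_nat (card (carrier G))" by (simp add: fourier_ind_def)
    hence "cmod S / card (carrier G) \<ge> sqrt (1 - \<epsilon>^2/2) * (card B / card (carrier G))"
      using gS by (simp add: prob_G_def norm_divide)
    hence Sb: "cmod S \<ge> sqrt (1 - \<epsilon>^2/2) * card B" using cGpos by (simp add: divide_simps)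
    define \<omega> where "\<omega> = (if S = 0 then 1 else S / cmod S)"
    have w1: "cmod \<omega> = 1" by (simp add: \<omega>_def norm_divide)
    have ReS: "Re (S * cnj \<omega>) = cmod S"
    proof (cases "S = 0")
      case False
      have "S * cnj S = of_real ((cmod S)^2)" by (rule complex_norm_square[symmetric])
      hence "S * cnj \<omega> = of_real ((cmod S)^2 / cmod S)" using False
        by (simp add: \<omega>_def)
      then show ?thesis using False by (simp only: Re_complex_of_real) (simp add: power2_eq_square)
    qed (simp add: \<omega>_def)
    define D where "D = (\<Sum>y\<in>B. (cmod (\<gamma> y - \<omega>))^2)"
    have "D = (\<Sum>y\<in>B. 2 - 2 * Re (\<gamma> y * cnj \<omega>))"
      unfolding D_def using BG n1 w1 by (intro sum.cong refl norm_diff_sq) auto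
    also have "\<dots> = 2 * card B - 2 * Re (S * cnj \<omega>)"
      by (simp add: sum_subtractf S_def sum_distrib_right sum_distrib_left Re_sum)
    finally have "D = 2 * card B - 2 * cmod S" using ReS by simp
    also have "\<dots> \<le> 2 * card B * (1 - sqrt (1 - \<epsilon>^2/2))" using Sb by (simp add: algebra_simps)
    also have "\<dots> \<le> 2 * card B * (\<epsilon>^2/2)"
      using assms(7,8) by (intro mult_left_mono sqrt_fact) (auto simp: power_le_one intro: order_trans[OF power_le_one[of \<epsilon> 2]])
    finally have Dle: "D \<le> \<epsilon>^2 * card B" by (simp add: mult.commute)
    have shift: "(\<Sum>x\<in>B'. (cmod (\<gamma> x * \<gamma> c - \<omega>))^2) \<le> D" if c: "c \<in> A" for c
    proof -
      have cG: "c \<in> carrier G" using c assms(3) by auto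
      have inj: "inj_on (\<lambda>x. x \<otimes> c) B'" proof (rule inj_onI)
        fix x y assume "x \<in> B'" "y \<in> B'" "x \<otimes> c = y \<otimes> c"
        then show "x = y" using B'G cG right_cancel[of c x y] by auto
      qed
      have "(\<Sum>x\<in>B'. (cmod (\<gamma> x * \<gamma> c - \<omega>))^2) = (\<Sum>x\<in>B'. (cmod (\<gamma> (x \<otimes> c) - \<omega>))^2)"
        using B'G cG mul by (intro sum.cong) auto
      also have "\<dots> = (\<Sum>y\<in>(\<lambda>x. x \<otimes> c) ` B'. (cmod (\<gamma> y - \<omega>))^2)"
        using sum.reindex[OF inj, of "\<lambda>y. (cmod (\<gamma> y - \<omega>))^2"] by (simp add: comp_def)
      also have "\<dots> \<le> D" unfolding D_def
        using c by (intro sum_mono2 finB) (auto simp: BB')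
      finally show ?thesis .
    qed
    have "(\<Sum>x\<in>B'. (cmod (\<gamma> a - \<gamma> b))^2) \<le> (\<Sum>x\<in>B'. 2 * (cmod (\<gamma> x * \<gamma> a - \<omega>))^2 + 2 * (cmod (\<gamma> x * \<gamma> b - \<omega>))^2)"
    proof (intro sum_mono)
      fix x assume x: "x \<in> B'"
      have "cmod (\<gamma> a - \<gamma> b) = cmod (\<gamma> x * \<gamma> a - \<gamma> x * \<gamma> b)"
        using n1[of x] x B'G by (auto simp: right_diff_distrib[symmetric] norm_mult)
      then show "(cmod (\<gamma> a - \<gamma> b))^2 \<le> 2 * (cmod (\<gamma> x * \<gamma> a - \<omega>))^2 + 2 * (cmod (\<gamma> x * \<gamma> b - \<omega>))^2"
        using sq_tri by metis
    qed
    also have "\<dots> = 2 * (\<Sum>x\<in>B'. (cmod (\<gamma> x * \<gamma> a - \<omega>))^2) + 2 * (\<Sum>x\<in>B'. (cmod (\<gamma> x * \<gamma> b - \<omega>))^2)"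
      by (simp add: sum.distrib sum_distrib_left)
    also have "\<dots> \<le> 4 * D" using shift[OF ab(1)] shift[OF ab(2)] by simp
    also have "\<dots> \<le> 4 * (\<epsilon>^2 * card B)" using Dle by simp
    also have "\<dots> \<le> 4 * (\<epsilon>^2 * (K * card B'))"
      using cardBK by (intro mult_left_mono) auto
    also have "\<dots> = 4 * \<epsilon>^2 * (K * card B')" by simp
    finally have "card B' * (cmod (\<gamma> a - \<gamma> b))^2 \<le> card B' * (4 * \<epsilon>^2 * K)" by (simp add: algebra_simps)
    hence sq: "(cmod (\<gamma> a - \<gamma> b))^2 \<le> (2 * \<epsilon> * sqrt K)^2" using cB'pos assms(4)
      by (simp add: power_mult_distrib)
    have "cmod (\<gamma> a - \<gamma> b) \<le> 2 * \<epsilon> * sqrt K" using power2_le_imp_le[OF sq] assms(4,7) by simp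
    also have "\<dots> \<le> 2 * \<epsilon> * sqrt (2 * K)" using assms(4,7) by simp
    finally have ineq: "cmod (\<gamma> a - \<gamma> b) \<le> 2 * \<epsilon> * sqrt (2 * K)" .
    have "\<gamma> z - 1 = (\<gamma> a - \<gamma> b) * cnj (\<gamma> b)"
    proof -
      have "\<gamma> b * cnj (\<gamma> b) = 1" using n1[OF bG]
        by (metis complex_norm_square mult.commute of_real_1 power_one complex_mult_cnj)
      then show ?thesis using ab aG bG mul lin_facts[OF assms(1) gL bG] by (simp add: algebra_simps)
    qed
    hence "cmod (\<gamma> z - 1) = cmod (\<gamma> a - \<gamma> b)" using n1[OF bG] by (simp add: norm_mult)
    then show "circ_norm (\<gamma> z) \<le> 2 * \<epsilon> * sqrt (2 * K)"
      using circ_le[OF n1[OF zG]] ineq by simp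
  qed
qed

end
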